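(* Let $\theta_1,\dots,\theta_{10}$ be real numbers such that $0<\theta_i<\theta_j<\theta_k<180$ for each of the triples $(i,j,k)\in\{(2,4,6),(1,5,9),(1,5,10),(1,5,7),(1,3,7),(1,4,7),(3,5,8),(2,8,9),(6,7,10)\}$, and write $s_{ij}=\sin(\theta_j-\theta_i)$. Suppose $$s_{89}\,s_{1,10}\,s_{24}\,s_{35}\,s_{67}+s_{46}\,s_{19}\,s_{7,10}\,s_{35}\,s_{28}-s_{46}\,s_{38}\,s_{7,10}\,s_{29}\,s_{15}=0 .$$ Then there is no $\mathbf r=(r_1,\dots,r_{10})\in\mathbb{R}^{10}$ satisfying simultaneously the nine strict inequalities $$r_is_{jk}-r_js_{ik}+r_ks_{ij}>0\quad\text{for }(i,j,k)\in\{(2,4,6),(1,5,9),(1,5,10),(1,5,7)\},$$ $$-r_is_{jk}+r_js_{ik}-r_ks_{ij}>0\quad\text{for }(i,j,k)\in\{(1,3,7),(1,4,7),(3,5,8),(2,8,9),(6,7,10)\}.$$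
   Context: Angles are in degrees. *)

theory Defs
  imports Complex_Main
begin

definition sdeg :: "real \<Rightarrow> real" where
  "sdeg x = sin (x * pi / 180)"

definition sij :: "(nat \<Rightarrow> real) \<Rightarrow> nat \<Rightarrow> nat \<Rightarrow> real" where
  "sij th i j = sdeg (th j - th i)"

definition ordered_triple :: "(nat \<Rightarrow> real) \<Rightarrow> nat \<Rightarrow> nat \<Rightarrow> nat \<Rightarrow> bool" where
  "ordered_triple th i j k \<longleftrightarrow> 0 < th i \<and> th i < th j \<and> th j < th k \<and> th k < 180"

definition triple_form :: "(nat \<Rightarrow> real) \<Rightarrow> (nat \<Rightarrow> real) \<Rightarrow> nat \<Rightarrow> nat \<Rightarrow> nat \<Rightarrow> real" where
  "triple_form th r i j k = r i * sij th j k - r j * sij th i k + r k * sij th i j"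

end

theory Submission imports Defs begin

lemma key: fixes c S r :: "nat \<Rightarrow> real" and s :: "nat \<Rightarrow> nat \<Rightarrow> real"
  assumes "\<And>i j. s i j = c i * S j - S i * c j"
  shows "(s 8 9 * s 7 10 * s 3 5 * s 1 5 * s 1 7 * (r 2 * s 4 6 - r 4 * s 2 6 + r 6 * s 2 4)) + (s 4 6 * s 7 10 * s 3 5 * s 2 8 * s 1 7 * (r 1 * s 5 9 - r 5 * s 1 9 + r 9 * s 1 5)) + (s 8 9 * s 2 4 * s 3 5 * s 6 7 * s 1 7 * (r 1 * s 5 10 - r 5 * s 1 10 + r 10 * s 1 5)) + (s 4 6 * s 7 10 * s 2 9 * s 1 5 * s 5 8 * - (r 1 * s 3 7 - r 3 * s 1 7 + r 7 * s 1 3)) + (s 8 9 * s 7 10 * s 3 5 * s 1 5 * s 2 6 * - (r 1 * s 4 7 - r 4 * s 1 7 + r 7 * s 1 4)) + (s 4 6 * s 7 10 * s 2 9 * s 1 5 * s 1 7 * - (r 3 * s 5 8 - r 5 * s 3 8 + r 8 * s 3 5)) + (s 4 6 * s 7 10 * s 3 5 * s 1 5 * s 1 7 * - (r 2 * s 8 9 - r 8 * s 2 9 + r 9 * s 2 8)) + (s 8 9 * s 2 4 * s 3 5 * s 1 5 * s 1 7 * - (r 6 * s 7 10 - r 7 * s 6 10 + r 10 * s 6 7)) = (s 8 9 * s 1 10 * s 2 4 * s 3 5 * s 6 7 + s 4 6 * s 1 9 * s 7 10 * s 3 5 * s 2 8 - s 4 6 * s 3 8 * s 7 10 * s 2 9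 * s 1 5) * (r 1 * s 5 7 - r 5 * s 1 7 + r 7 * s 1 5)"
  unfolding assms by algebra

lemma sij_expand: "sij th i j = cos (th i * pi / 180) * sin (th j * pi / 180) - sin (th i * pi / 180) * cos (th j * pi / 180)"
proof -
  have "(th j - th i) * pi / 180 = th j * pi / 180 - th i * pi / 180" by (simp add: field_simps)
  then show ?thesis unfolding sij_def sdeg_def by (simp only: sin_diff) (simp add: algebra_simps)
qed

lemma sij_pos: assumes "th i < th j" "th j < th i + 180" shows "0 < sij th i j"
proof -
  have "0 < (th j - th i) * pi / 180" using assms by simp
  moreover have "(th j - th i) * pi / 180 < pi" proof -
    have "th j - th i < 180" using assms by simp
    then have "(th j - th i) * pi < 180 * pi" using pi_gt_zero by (intro mult_strict_right_mono)
    then show ?thesis by simp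
  qed
  ultimately show ?thesis unfolding sij_def sdeg_def by (intro sin_gt_zero)
qed

theorem lemmal:
  fixes th :: "nat \<Rightarrow> real"
  assumes "\<forall>(i,j,k) \<in> {(2,4,6),(1,5,9),(1,5,10),(1,5,7),(1,3,7),(1,4,7),(3,5,8),(2,8,9),(6,7,10)}.
             ordered_triple th i j k"
    and "sij th 8 9 * sij th 1 10 * sij th 2 4 * sij th 3 5 * sij th 6 7
       + sij th 4 6 * sij th 1 9 * sij th 7 10 * sij th 3 5 * sij th 2 8
       - sij th 4 6 * sij th 3 8 * sij th 7 10 * sij th 2 9 * sij th 1 5 = 0"
  shows "\<not> (\<exists>r :: nat \<Rightarrow> real.
            (\<forall>(i,j,k) \<in> {(2,4,6),(1,5,9),(1,5,10),(1,5,7)}. triple_form th r i j k > 0)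
          \<and> (\<forall>(i,j,k) \<in> {(1,3,7),(1,4,7),(3,5,8),(2,8,9),(6,7,10)}. - triple_form th r i j k > 0))"
proof
  assume "\<exists>r :: nat \<Rightarrow> real.
            (\<forall>(i,j,k) \<in> {(2,4,6),(1,5,9),(1,5,10),(1,5,7)}. triple_form th r i j k > 0)
          \<and> (\<forall>(i,j,k) \<in> {(1,3,7),(1,4,7),(3,5,8),(2,8,9),(6,7,10)}. - triple_form th r i j k > 0)"
  then obtain r where fp0: "\<forall>(i,j,k) \<in> {(2,4,6),(1,5,9),(1,5,10),(1,5,7)}. triple_form th r i j k > 0"
     and fn0: "\<forall>(i,j,k) \<in> {(1,3,7),(1,4,7),(3,5,8),(2,8,9),(6,7,10)}. - triple_form th r i j k > 0" by blast
  have fp: "triple_form th r 2 4 6 > 0" "triple_form th r 1 5 9 > 0" "triple_form th r 1 5 10 > 0" "triple_form th r 1 5 7 > 0" "- triple_form th r 1 3 7 > 0" "- triple_form th r 1 4 7 > 0" "- triple_form th r 3 5 8 > 0" "- triple_form th r 2 8 9 > 0" "- triple_form th r 6 7 10 > 0"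
    using fp0 fn0 by auto
  have ot: "ordered_triple th 2 4 6" "ordered_triple th 1 5 9" "ordered_triple th 1 5 10" "ordered_triple th 1 5 7" "ordered_triple th 1 3 7" "ordered_triple th 1 4 7" "ordered_triple th 3 5 8" "ordered_triple th 2 8 9" "ordered_triple th 6 7 10"
    using assms(1) by auto
  have sp: "0 < sij th 1 5" "0 < sij th 1 7" "0 < sij th 1 9" "0 < sij th 1 10" "0 < sij th 2 4" "0 < sij th 2 6" "0 < sij th 2 8" "0 < sij th 2 9" "0 < sij th 3 5" "0 < sij th 3 8" "0 < sij th 4 6" "0 < sij th 5 8" "0 < sij th 6 7" "0 < sij th 7 10" "0 < sij th 8 9"
    using ot by (auto intro!: sij_pos simp: ordered_triple_def)
  have t0: "0 < (sij th 8 9 * sij th 7 10 * sij th 3 5 * sij th 1 5 * sij th 1 7) * (triple_form th r 2 4 6)"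
    by (intro mult_pos_pos) (use sp fp in auto)
  have t1: "0 < (sij th 4 6 * sij th 7 10 * sij th 3 5 * sij th 2 8 * sij th 1 7) * (triple_form th r 1 5 9)"
    by (intro mult_pos_pos) (use sp fp in auto)
  have t2: "0 < (sij th 8 9 * sij th 2 4 * sij th 3 5 * sij th 6 7 * sij th 1 7) * (triple_form th r 1 5 10)"
    by (intro mult_pos_pos) (use sp fp in auto)
  have t3: "0 < (sij th 4 6 * sij th 7 10 * sij th 2 9 * sij th 1 5 * sij th 5 8) * (- triple_form th r 1 3 7)"
    by (intro mult_pos_pos) (use sp fp in auto)
  have t4: "0 < (sij th 8 9 * sij th 7 10 * sij th 3 5 * sij th 1 5 * sij th 2 6) * (- triple_form th r 1 4 7)"
    by (intro mult_pos_pos) (use sp fp in auto)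
  have t5: "0 < (sij th 4 6 * sij th 7 10 * sij th 2 9 * sij th 1 5 * sij th 1 7) * (- triple_form th r 3 5 8)"
    by (intro mult_pos_pos) (use sp fp in auto)
  have t6: "0 < (sij th 4 6 * sij th 7 10 * sij th 3 5 * sij th 1 5 * sij th 1 7) * (- triple_form th r 2 8 9)"
    by (intro mult_pos_pos) (use sp fp in auto)
  have t7: "0 < (sij th 8 9 * sij th 2 4 * sij th 3 5 * sij th 1 5 * sij th 1 7) * (- triple_form th r 6 7 10)"
    by (intro mult_pos_pos) (use sp fp in auto)
  have "0 < (sij th 8 9 * sij th 7 10 * sij th 3 5 * sij th 1 5 * sij th 1 7) * (triple_form th r 2 4 6) + (sij th 4 6 * sij th 7 10 * sij th 3 5 * sij th 2 8 * sij th 1 7) * (triple_form th r 1 5 9) + (sij th 8 9 * sij th 2 4 * sij th 3 5 * sij th 6 7 * sij th 1 7) * (triple_form th r 1 5 10) + (sij th 4 6 * sij th 7 10 * sij th 2 9 * sij th 1 5 * sij th 5 8) * (- triple_form th r 1 3 7) + (sij th 8 9 * sij th 7 10 * sij th 3 5 * sij th 1 5 * sij th 2 6) * (- triple_form th r 1 4 7) + (sij th 4 6 * sij th 7 10 * sij th 2 9 * sij th 1 5 * sij th 1 7) * (- triple_form th r 3 5 8) + (sij th 4 6 * sij th 7 10 * sij th 3 5 * sij th 1 5 * sij th 1 7) * (- triple_form th r 2 8 9) + (sij th 8 9 * sij th 2 4 * sij th 3 5 * sij th 1 5 * sij th 1 7) * (- triple_form th r 6 7 10)"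
    using t0 t1 t2 t3 t4 t5 t6 t7 by linarith
  also have "(sij th 8 9 * sij th 7 10 * sij th 3 5 * sij th 1 5 * sij th 1 7) * (triple_form th r 2 4 6) + (sij th 4 6 * sij th 7 10 * sij th 3 5 * sij th 2 8 * sij th 1 7) * (triple_form th r 1 5 9) + (sij th 8 9 * sij th 2 4 * sij th 3 5 * sij th 6 7 * sij th 1 7) * (triple_form th r 1 5 10) + (sij th 4 6 * sij th 7 10 * sij th 2 9 * sij th 1 5 * sij th 5 8) * (- triple_form th r 1 3 7) + (sij th 8 9 * sij th 7 10 * sij th 3 5 * sij th 1 5 * sij th 2 6) * (- triple_form th r 1 4 7) + (sij th 4 6 * sij th 7 10 * sij th 2 9 * sij th 1 5 * sij th 1 7) * (- triple_form th r 3 5 8) + (sij th 4 6 * sij th 7 10 * sij th 3 5 * sij th 1 5 * sij th 1 7) * (- triple_form th r 2 8 9) + (sij th 8 9 * sij th 2 4 * sij th 3 5 * sij th 1 5 * sij th 1 7) * (- triple_form th r 6 7 10) = (sij th 8 9 * sij th 1 10 * sij th 2 4 * sij th 3 5 * sij th 6 7 + sij th 4 6 * sij th 1 9 * sij th 7 10 * sij th 3 5 * sij th 2 8 - sij th 4 6 * sij th 3 8 * sij th 7 10 * sij th 2 9 * sij th 1 5) * (r 1 * sij th 5 7 - r 5 * sij th 1 7 + r 7 * sij th 1 5)"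
    unfolding triple_form_def
    by (rule key[where s="sij th"], rule sij_expand)
  also have "\<dots> = 0" using assms(2) by simp
  finally show False by simp
qed

end
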